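(* Let $\xi$ be a real random variable with $\mathbb{E}\xi^2=\infty$ and let $M>0$. Then there exists $m_0$, depending only on $M$ and the distribution of $\xi$, such that for every $m>m_0$, if $B$ is an $m\times m$ random matrix whose entries are i.i.d. copies of $\xi$, then $$\|B\|\ge M\sqrt m$$ with probability at least $1-\exp(-M^2m)$.
   Context: $\|\cdot\|$ denotes the operator norm (Euclidean norm to Euclidean norm). *)

theory Defs
  imports "HOL-Probability.Probability"
begin

definition op_norm :: "nat \<Rightarrow> (nat \<times> nat \<Rightarrow> real) \<Rightarrow> real" where
  "op_norm m A = Sup {sqrt (\<Sum>i<m. (\<Sum>j<m. A (i,j) * x j)^2) | x :: nat \<Rightarrow> real.
                        (\<Sum>j<m. (x j)^2) \<le> 1}"

end

theory Submission
  imports Defs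
begin


definition fx :: "nat \<Rightarrow> (nat \<Rightarrow> real) \<Rightarrow> (nat \<times> nat \<Rightarrow> real) \<Rightarrow> real" where
  "fx m x A = sqrt (\<Sum>i<m. (\<Sum>j<m. A (i,j) * x j)^2)"


lemma fx_bound:
  assumes "(\<Sum>j<m. (x j)^2) \<le> (1::real)"
  shows "fx m x A \<le> sqrt (\<Sum>i<m. \<Sum>j<m. (A (i,j))^2)"
proof -
  have "(\<Sum>j<m. A (i,j) * x j)^2 \<le> (\<Sum>j<m. (A (i,j))^2)" for i
  proof -
    have "(\<Sum>j<m. A (i,j) * x j)^2 \<le> (\<Sum>j<m. (A (i,j))^2) * (\<Sum>j<m. (x j)^2)"
      by (rule Cauchy_Schwarz_ineq_sum)
    also have "\<dots> \<le> (\<Sum>j<m. (A (i,j))^2) * 1"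
      by (intro mult_left_mono assms sum_nonneg) auto
    finally show ?thesis by simp
  qed
  then show ?thesis unfolding fx_def by (intro real_sqrt_le_mono sum_mono) auto
qed

lemma op_norm_alt: "op_norm m A = Sup ((\<lambda>x. fx m x A) ` {x. (\<Sum>j<m. (x j)^2) \<le> (1::real)})"
  unfolding op_norm_def fx_def by (simp add: image_def setcompr_eq_image)

lemma opset_ne: "(\<lambda>x. fx m x A) ` {x. (\<Sum>j<m. (x j)^2) \<le> (1::real)} \<noteq> {}"
  by (auto intro!: exI[of _ "\<lambda>_. 0"])

lemma opset_bdd: "bdd_above ((\<lambda>x. fx m x A) ` {x. (\<Sum>j<m. (x j)^2) \<le> (1::real)})"
  using fx_bound by (intro bdd_aboveI2) blast

lemma op_norm_ge_col:
  assumes "k < m"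
  shows "sqrt (\<Sum>i<m. (A (i,k))^2) \<le> op_norm m A"
proof -
  let ?x = "\<lambda>j. if j = k then 1 else (0::real)"
  have "(\<Sum>j<m. (?x j)^2) = (\<Sum>j<m. ?x j)" by (intro sum.cong) auto
  also have "\<dots> = 1" using assms by (simp add: sum.delta)
  finally have "(\<Sum>j<m. (?x j)^2) = 1" .
  moreover have "fx m ?x A = sqrt (\<Sum>i<m. (A (i,k))^2)"
  proof -
    have "(\<Sum>j<m. A (i,j) * ?x j) = A (i,k)" for i
    proof -
      have "(\<Sum>j<m. A (i,j) * ?x j) = (\<Sum>j<m. if j = k then A (i,k) else 0)" by (intro sum.cong) auto
      also have "\<dots> = A (i,k)" using assms by (simp add: sum.delta)
      finally show ?thesis .
    qed
    then show ?thesis unfolding fx_def by simp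
  qed
  ultimately have "sqrt (\<Sum>i<m. (A (i,k))^2) \<in> (\<lambda>x. fx m x A) ` {x. (\<Sum>j<m. (x j)^2) \<le> (1::real)}"
    by (intro image_eqI[where x="?x"]) simp_all
  then show ?thesis unfolding op_norm_alt by (rule cSup_upper[OF _ opset_bdd])
qed

lemma op_norm_frob:
  assumes "m > 0"
  shows "(\<Sum>i<m. \<Sum>j<m. (A (i,j))^2) \<le> real m * (op_norm m A)^2"
proof -
  have "(\<Sum>i<m. \<Sum>j<m. (A (i,j))^2) = (\<Sum>j<m. \<Sum>i<m. (A (i,j))^2)" by (rule sum.swap)
  also have "\<dots> \<le> (\<Sum>j<m. (op_norm m A)^2)"
  proof (rule sum_mono)
    fix j assume "j \<in> {..<m}"
    then have h: "sqrt (\<Sum>i<m. (A (i,j))^2) \<le> op_norm m A" using op_norm_ge_col by auto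
    have "(\<Sum>i<m. (A (i,j))^2) = (sqrt (\<Sum>i<m. (A (i,j))^2))^2" proof -
      have nn: "0 \<le> (\<Sum>i<m. (A (i,j))^2)" by (rule sum_nonneg) simp
      show ?thesis by (rule real_sqrt_pow2[symmetric, OF nn])
    qed
    also have "\<dots> \<le> (op_norm m A)^2" using h by (intro power_mono) (simp_all add: sum_nonneg)
    finally show "(\<Sum>i<m. (A (i,j))^2) \<le> (op_norm m A)^2" .
  qed
  finally show ?thesis by simp
qed

lemma op_norm_nonneg: "m > 0 \<Longrightarrow> op_norm m A \<ge> 0"
  using op_norm_ge_col[of 0 m A] by (meson order_trans real_sqrt_ge_zero sum_nonneg zero_le_power2)

lemma op_norm_lower:
  assumes "m > 0" "M > 0" "(\<Sum>i<m. \<Sum>j<m. (A (i,j))^2) \<ge> M^2 * (real m)^2"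
  shows "op_norm m A \<ge> M * sqrt (real m)"
proof -
  have "M^2 * (real m)^2 \<le> real m * (op_norm m A)^2" using op_norm_frob[OF assms(1), of A] assms(3) by linarith
  then have "M^2 * real m \<le> (op_norm m A)^2" using assms(1) by (simp add: power2_eq_square)
  moreover have "0 \<le> op_norm m A" using op_norm_nonneg[OF assms(1)] .
  moreover have "0 \<le> M^2 * real m" by simp
  ultimately have "sqrt (M^2 * real m) \<le> op_norm m A" by (intro real_le_lsqrt)
  then show ?thesis using assms(2) by (simp add: real_sqrt_mult)
qed




definition ext :: "nat \<Rightarrow> (nat \<times> nat \<Rightarrow> real) \<Rightarrow> (nat \<times> nat \<Rightarrow> real)" where
  "ext m B = (\<lambda>p. if p \<in> {..<m}\<times>{..<m} then B p else 0)"

lemma op_norm_ext: "op_norm m (ext m B) = op_norm m B"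
  unfolding op_norm_def ext_def by simp

lemma fx_cont: "continuous_on UNIV (fx m x)"
  unfolding fx_def by (intro continuous_intros continuous_on_product_coordinates)

lemma open_op_norm: "open {A :: nat \<times> nat \<Rightarrow> real. t < op_norm m A}"
proof -
  have "{A :: nat \<times> nat \<Rightarrow> real. t < op_norm m A} = (\<Union>x\<in>{x. (\<Sum>j<m. (x j)^2) \<le> (1::real)}. {A. t < fx m x A})"
    unfolding op_norm_alt by (auto simp: less_cSup_iff[OF opset_ne opset_bdd])
  also have "open \<dots>"
    by (intro open_UN ballI open_Collect_less continuous_on_const fx_cont)
  finally show ?thesis .
qed

lemma ext_meas:
  assumes "sets \<mu> = sets borel"
  shows "ext m \<in> borel_measurable (PiM ({..<m}\<times>{..<m}) (\<lambda>_. \<mu>))"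
proof -
  have h: "(\<lambda>B. ext m B p) \<in> borel_measurable (PiM ({..<m}\<times>{..<m}) (\<lambda>_. \<mu>))" for p
  proof (cases "p \<in> {..<m}\<times>{..<m}")
    case True
    have "(\<lambda>x. x p) \<in> measurable (PiM ({..<m}\<times>{..<m}) (\<lambda>_. \<mu>)) \<mu>"
      using True by (rule measurable_component_singleton)
    then have "(\<lambda>x. x p) \<in> borel_measurable (PiM ({..<m}\<times>{..<m}) (\<lambda>_. \<mu>))"
      by (subst measurable_cong_sets[OF refl assms, symmetric])
    moreover have "(\<lambda>B. ext m B p) = (\<lambda>x. x p)" using True unfolding ext_def by simp
    ultimately show ?thesis by simp
  next
    case False
    then have "(\<lambda>B. ext m B p) = (\<lambda>x. 0)" unfolding ext_def by simp
    then show ?thesis by simp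
  qed
  then show ?thesis by (rule measurable_coordinatewise_then_product)
qed

lemma le_approx: "(c::real) \<le> y \<longleftrightarrow> (\<forall>n. c - 1 / real (Suc n) < y)"
proof
  assume "c \<le> y"
  then show "\<forall>n. c - 1 / real (Suc n) < y"
  proof (intro allI)
    fix n
    have "0 < 1 / real (Suc n)" by simp
    with \<open>c \<le> y\<close> show "c - 1 / real (Suc n) < y" by linarith
  qed
next
  assume B: "\<forall>n. c - 1 / real (Suc n) < y"
  show "c \<le> y"
  proof (rule ccontr)
    assume "\<not> c \<le> y"
    then have "0 < c - y" by simp
    then obtain n where n: "inverse (real (Suc n)) < c - y"
      using reals_Archimedean by blast
    have "c - 1 / real (Suc n) < y" using B by blast
    with n show False by (simp add: inverse_eq_divide)
  qed
qed

lemma op_norm_set_meas: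
  assumes "sets \<mu> = sets borel"
  shows "{B \<in> space (PiM ({..<m}\<times>{..<m}) (\<lambda>_. \<mu>)). c \<le> op_norm m B} \<in> sets (PiM ({..<m}\<times>{..<m}) (\<lambda>_. \<mu>))"
proof -
  let ?P = "PiM ({..<m}\<times>{..<m}) (\<lambda>_. \<mu>)"
  have op: "{B \<in> space ?P. t < op_norm m B} \<in> sets ?P" for t
  proof -
    have "{B \<in> space ?P. t < op_norm m B} = ext m -` {A. t < op_norm m A} \<inter> space ?P"
      by (auto simp: op_norm_ext)
    also have "\<dots> \<in> sets ?P"
      by (intro measurable_sets[OF ext_meas[OF assms]] borel_open open_op_norm)
    finally show ?thesis .
  qed
  have "{B \<in> space ?P. c \<le> op_norm m B} = (\<Inter>n. {B \<in> space ?P. c - 1 / real (Suc n) < op_norm m B}) \<inter> space ?P"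
  proof (rule set_eqI)
    fix B
    show "B \<in> {B \<in> space ?P. c \<le> op_norm m B} \<longleftrightarrow> B \<in> (\<Inter>n. {B \<in> space ?P. c - 1 / real (Suc n) < op_norm m B}) \<inter> space ?P"
      using le_approx[of c "op_norm m B"] by blast
  qed
  also have "\<dots> \<in> sets ?P" by (intro sets.Int sets.countable_INT sets.top) (auto intro: op)
  finally show ?thesis .
qed




lemma trunc_meas:
  assumes "sets \<mu> = sets borel"
  shows "(\<lambda>x::real. min (x^2) K) \<in> borel_measurable \<mu>"
proof -
  have "(\<lambda>x::real. min (x^2) K) \<in> borel_measurable borel" by measurable
  then show ?thesis by (subst measurable_cong_sets[OF assms refl])
qed

lemma trunc:
  fixes \<mu> :: "real measure"
  assumes ps: "prob_space \<mu>" and sets: "sets \<mu> = sets borel"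
    and inf: "(\<integral>\<^sup>+ x. ennreal (x^2) \<partial>\<mu>) = \<infinity>"
  shows "\<exists>K>0. L \<le> (\<integral>x. min (x^2) K \<partial>\<mu>)"
proof -
  interpret prob_space \<mu> by (rule ps)
  define f where "f n x = ennreal (min (x^2) (real n))" for n and x :: real
  have inc: "incseq f"
    unfolding f_def by (intro incseq_SucI le_funI ennreal_leI) auto
  have fm: "f n \<in> borel_measurable \<mu>" for n
    unfolding f_def using trunc_meas[OF sets, of "real n"] by measurable
  have sup: "(SUP n. f n x) = ennreal (x^2)" for x
  proof (rule antisym)
    show "(SUP n. f n x) \<le> ennreal (x^2)"
      unfolding f_def by (intro SUP_least ennreal_leI) auto
    obtain n where "x^2 \<le> real n" using real_arch_simple by blast
    then have "f n x = ennreal (x^2)" unfolding f_def by simp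
    then show "ennreal (x^2) \<le> (SUP n. f n x)" by (metis SUP_upper UNIV_I)
  qed
  have "(\<integral>\<^sup>+ x. ennreal (x^2) \<partial>\<mu>) = (SUP n. \<integral>\<^sup>+ x. f n x \<partial>\<mu>)"
    using nn_integral_monotone_convergence_SUP[OF inc fm] by (simp add: sup)
  with inf have eqi: "(SUP n. \<integral>\<^sup>+ x. f n x \<partial>\<mu>) = \<infinity>" by simp
  have "ennreal (max L 0) < (SUP n. \<integral>\<^sup>+ x. f n x \<partial>\<mu>)" unfolding eqi by simp
  then obtain n where n: "ennreal (max L 0) < (\<integral>\<^sup>+ x. f n x \<partial>\<mu>)"
    by (auto simp: less_SUP_iff)
  have int: "integrable \<mu> (\<lambda>x. min (x^2) (real n))"
    by (rule integrable_const_bound[where B="real n"]) (auto intro: trunc_meas[OF sets])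
  have "(\<integral>\<^sup>+ x. f n x \<partial>\<mu>) = ennreal (\<integral>x. min (x^2) (real n) \<partial>\<mu>)"
    unfolding f_def by (rule nn_integral_eq_integral[OF int]) auto
  with n have "ennreal (max L 0) < ennreal (\<integral>x. min (x^2) (real n) \<partial>\<mu>)"
    by (simp only:)
  then have lt: "max L 0 < (\<integral>x. min (x^2) (real n) \<partial>\<mu>)"
    using ennreal_less_iff[of "max L 0" "\<integral>x. min (x^2) (real n) \<partial>\<mu>"] by simp
  have "n \<noteq> 0"
  proof
    assume "n = 0"
    then have "(\<integral>x. min (x^2) (real n) \<partial>\<mu>) = 0" by simp
    with lt show False by simp
  qed
  then show ?thesis using lt by (intro exI[of _ "real n"]) auto
qed




lemma main_m:
  fixes \<mu> :: "real measure" and M K :: real and m :: nat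
  assumes ps: "prob_space \<mu>" and sets: "sets \<mu> = sets borel"
    and M: "M > 0" and K: "K > 0" and m: "m > 0"
    and E: "2 * M^2 \<le> (\<integral>x. min (x^2) K \<partial>\<mu>)"
    and mK: "K^2 \<le> 2 * M^2 * real m"
  shows "measure (PiM ({..<m} \<times> {..<m}) (\<lambda>_. \<mu>))
             {B \<in> space (PiM ({..<m} \<times> {..<m}) (\<lambda>_. \<mu>)). op_norm m B \<ge> M * sqrt (real m)}
           \<ge> 1 - exp (- (M^2) * real m)"
proof -
  define I where "I = {..<m} \<times> {..<m}"
  define P where "P = PiM I (\<lambda>_. \<mu>)"
  define Y where "Y p B = min ((B p)^2) K" for p :: "nat \<times> nat" and B :: "nat \<times> nat \<Rightarrow> real"
  define Em where "Em = (\<integral>x. min (x^2) K \<partial>\<mu>)"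
  have finI: "finite I" and neI: "I \<noteq> {}" and cardI: "card I = m^2"
    using m by (auto simp: I_def card_cartesian_product power2_eq_square)
  interpret P: prob_space P unfolding P_def by (intro prob_space_PiM ps)
  have comp: "(\<lambda>B. B p) \<in> measurable P \<mu>" if "p \<in> I" for p
    unfolding P_def using that by (rule measurable_component_singleton)
  have gm: "(\<lambda>x::real. min (x^2) K) \<in> measurable \<mu> borel" by (rule trunc_meas[OF sets])
  have Ym: "Y p \<in> borel_measurable P" if "p \<in> I" for p
    unfolding Y_def using measurable_comp[OF comp[OF that] gm] by (simp add: comp_def)
  have ind0: "P.indep_vars (\<lambda>_. \<mu>) (\<lambda>p B. B p) I"
  proof (subst P.indep_vars_iff_distr_eq_PiM'[OF neI])
    show "(\<lambda>B. B p) \<in> measurable P \<mu>" if "p \<in> I" for p using comp[OF that] .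
    have "distr P (PiM I (\<lambda>_. \<mu>)) (\<lambda>x. \<lambda>i\<in>I. x i) = distr P P (\<lambda>x. x)"
      unfolding P_def by (intro distr_cong) (auto simp: space_PiM PiE_def extensional_restrict)
    also have "\<dots> = P" by (rule distr_id)
    also have "P = PiM I (\<lambda>i. distr P \<mu> (\<lambda>x. x i))"
      unfolding P_def by (intro PiM_cong refl distr_PiM_component[symmetric] ps)
    finally show "distr P (PiM I (\<lambda>_. \<mu>)) (\<lambda>x. \<lambda>i\<in>I. x i) = PiM I (\<lambda>i. distr P \<mu> (\<lambda>x. x i))" .
  qed
  have ind: "P.indep_vars (\<lambda>_. borel) Y I"
    unfolding Y_def using P.indep_vars_compose2[OF ind0, of "\<lambda>_ x. min (x^2) K" "\<lambda>_. borel"] gm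
    by simp
  have expY: "P.expectation (Y p) = Em" if "p \<in> I" for p
  proof -
    have "P.expectation (Y p) = (\<integral>x. min (x^2) K \<partial>(distr P \<mu> (\<lambda>B. B p)))"
      unfolding Y_def by (rule integral_distr[symmetric, OF comp[OF that] gm])
    also have "distr P \<mu> (\<lambda>B. B p) = \<mu>"
      unfolding P_def using that by (intro distr_PiM_component ps)
    finally show ?thesis unfolding Em_def .
  qed
  interpret H: Hoeffding_ineq P I Y "\<lambda>_. 0" "\<lambda>_. K" "\<Sum>i\<in>I. P.expectation (Y i)"
  proof unfold_locales
    show "finite I" by (rule finI)
    show "P.indep_vars (\<lambda>_. borel) Y I" by (rule ind)
    show "AE x in P. Y i x \<in> {0..K}" if "i \<in> I" for i
      using K by (intro AE_I2) (auto simp: Y_def)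
  qed
  define r where "r = real m"
  have r: "r > 0" using m by (simp add: r_def)
  define \<epsilon> where "\<epsilon> = r^2 * Em - M^2 * r^2"
  have sumE: "(\<Sum>i\<in>I. P.expectation (Y i)) = r^2 * Em"
    using expY cardI by (simp add: r_def)
  have eps: "M^2 * r^2 \<le> \<epsilon>"
  proof -
    have "2 * M^2 * r^2 \<le> Em * r^2" using E r unfolding Em_def by (intro mult_right_mono) auto
    then show ?thesis unfolding \<epsilon>_def by (simp add: algebra_simps)
  qed
  have eps0: "0 \<le> \<epsilon>" using eps by (smt (verit) zero_le_mult_iff zero_le_power2)
  have den: "(\<Sum>i\<in>I. (K - 0)^2) = r^2 * K^2"
    using cardI by (simp add: r_def)
  have denpos: "(\<Sum>i\<in>I. (K - 0)^2) > 0" unfolding den using r K by simp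
  define S where "S = {x \<in> space P. (\<Sum>i\<in>I. Y i x) \<le> (\<Sum>i\<in>I. P.expectation (Y i)) - \<epsilon>}"
  have HS: "P.prob S \<le> exp (-2 * \<epsilon>^2 / (\<Sum>i\<in>I. (K - 0)^2))"
    unfolding S_def by (rule H.Hoeffding_ineq_le[OF eps0 denpos])
  have Sm: "S \<in> P.events"
  proof -
    have sm: "(\<lambda>x. \<Sum>i\<in>I. Y i x) \<in> borel_measurable P"
      using Ym by (intro borel_measurable_sum) auto
    have "S = (\<lambda>x. \<Sum>i\<in>I. Y i x) -` {..(\<Sum>i\<in>I. P.expectation (Y i)) - \<epsilon>} \<inter> space P"
      unfolding S_def by auto
    also have "\<dots> \<in> P.events" by (intro measurable_sets[OF sm] borel_closed closed_atMost)
    finally show ?thesis .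
  qed
  define T where "T = {B \<in> space P. op_norm m B \<ge> M * sqrt (real m)}"
  have Tm: "T \<in> P.events"
    unfolding T_def P_def I_def by (rule op_norm_set_meas[OF sets])
  have sub: "space P - S \<subseteq> T"
  proof
    fix B assume B: "B \<in> space P - S"
    then have lt: "r^2 * Em - \<epsilon> < (\<Sum>i\<in>I. Y i B)" unfolding S_def sumE by auto
    have "(\<Sum>i\<in>I. Y i B) \<le> (\<Sum>i\<in>I. (B i)^2)"
      unfolding Y_def by (intro sum_mono) auto
    also have "\<dots> = (\<Sum>i<m. \<Sum>j<m. (B (i,j))^2)"
      unfolding I_def by (simp add: sum.cartesian_product)
    finally have "M^2 * (real m)^2 \<le> (\<Sum>i<m. \<Sum>j<m. (B (i,j))^2)"
      using lt unfolding \<epsilon>_def r_def by simp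
    then have "op_norm m B \<ge> M * sqrt (real m)" by (rule op_norm_lower[OF m M])
    then show "B \<in> T" using B unfolding T_def by auto
  qed
  have fin: "exp (-2 * \<epsilon>^2 / (\<Sum>i\<in>I. (K - 0)^2)) \<le> exp (- (M^2) * real m)"
  proof -
    have "M^2 * r * (r^2 * K^2) \<le> M^2 * r * (r^2 * (2 * M^2 * r))"
      using mK r by (intro mult_left_mono) (auto simp: r_def)
    also have "\<dots> = 2 * (M^2 * r^2)^2" by (simp add: power2_eq_square algebra_simps)
    also have "\<dots> \<le> 2 * \<epsilon>^2"
      using eps by (intro mult_left_mono power_mono) auto
    finally have "M^2 * r * (r^2 * K^2) \<le> 2 * \<epsilon>^2" .
    then have "M^2 * r \<le> 2 * \<epsilon>^2 / (r^2 * K^2)"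
      using r K by (simp add: le_divide_eq)
    then have "-2 * \<epsilon>^2 / (r^2 * K^2) \<le> - (M^2) * r" by simp
    then show ?thesis unfolding den r_def by simp
  qed
  have "1 - exp (- (M^2) * real m) \<le> 1 - P.prob S" using HS fin by linarith
  also have "\<dots> = P.prob (space P - S)" using P.prob_compl[OF Sm] by simp
  also have "\<dots> \<le> P.prob T" by (rule P.finite_measure_mono[OF sub Tm])
  finally show ?thesis unfolding T_def P_def I_def .
qed



theorem mainTheorem19:
  fixes \<mu> :: "real measure" and M :: real
  assumes "prob_space \<mu>"
    and "sets \<mu> = sets borel"
    and "(\<integral>\<^sup>+ x. ennreal (x^2) \<partial>\<mu>) = \<infinity>"
    and "M > 0"
  shows "\<exists>m0::nat. \<forall>m > m0.
           measure (PiM ({..<m} \<times> {..<m}) (\<lambda>_. \<mu>))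
             {B \<in> space (PiM ({..<m} \<times> {..<m}) (\<lambda>_. \<mu>)). op_norm m B \<ge> M * sqrt (real m)}
           \<ge> 1 - exp (- (M^2) * real m)"
proof -
  obtain K where K: "K > 0" and E: "2 * M^2 \<le> (\<integral>x. min (x^2) K \<partial>\<mu>)"
    using trunc[OF assms(1-3), of "2 * M^2"] by blast
  define m0 where "m0 = nat \<lceil>K^2 / (2 * M^2)\<rceil>"
  show ?thesis
  proof (intro exI[of _ m0] allI impI)
    fix m assume mm: "m0 < m"
    then have m: "m > 0" by simp
    have "K^2 / (2 * M^2) \<le> real m0" unfolding m0_def by (rule real_nat_ceiling_ge)
    also have "\<dots> \<le> real m" using mm by simp
    finally have "K^2 \<le> 2 * M^2 * real m" using assms(4) by (simp add: divide_le_eq mult.commute)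
    then show "measure (PiM ({..<m} \<times> {..<m}) (\<lambda>_. \<mu>))
             {B \<in> space (PiM ({..<m} \<times> {..<m}) (\<lambda>_. \<mu>)). op_norm m B \<ge> M * sqrt (real m)}
           \<ge> 1 - exp (- (M^2) * real m)"
      by (rule main_m[OF assms(1,2,4) K m E])
  qed
qed

end
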